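(* Let $p$ be a binary word of length $l$ with exactly $3$ runs whose second run has size at least $2$. For every $n\ge l$, every $p$-optimal binary word of length $n$ has exactly $3$ runs.
   Context: $c_p(w)$ is the number of occurrences of $p$ as a (not necessarily consecutive) subsequence of $w$. $M_{n,p}=\max\{c_p(w): w\in\{0,1\}^n\}$; a binary word $w$ of length $n$ is $p$-optimal if $c_p(w)=M_{n,p}$. A run is a maximal block of consecutive equal letters; its size is its length. *)

theory Defs
  imports Main
begin

definition occ :: "bool list \<Rightarrow> bool list \<Rightarrow> nat" where
  "occ p w = card {I. I \<subseteq> {0..<length w} \<and> card I = length p \<and> nths w I = p}"

definition maxocc :: "nat \<Rightarrow> bool list \<Rightarrow> nat" where
  "maxocc n p = Max ((\<lambda>w. occ p w) ` {w. length w = n})"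

definition optimal :: "bool list \<Rightarrow> bool list \<Rightarrow> bool" where
  "optimal p w \<longleftrightarrow> occ p w = maxocc (length w) p"

fun runs :: "'a list \<Rightarrow> 'a list list" where
  "runs [] = []"
| "runs (x # xs) = (case runs xs of
      [] \<Rightarrow> [[x]]
    | r # rs \<Rightarrow> (if hd r = x then (x # r) # rs else [x] # r # rs))"

end

theory Submission
  imports Defs
begin


fun sc :: "'a list \<Rightarrow> 'a list \<Rightarrow> nat" where
  "sc [] w = 1"
| "sc (x#p) [] = 0"
| "sc (x#p) (y#w) = sc (x#p) w + (if x = y then sc p w else 0)"

definition OS :: "'a list \<Rightarrow> 'a list \<Rightarrow> nat set set" where
  "OS p w = {I. I \<subseteq> {0..<length w} \<and> card I = length p \<and> nths w I = p}"

lemma OS_fin: "finite (OS p w)"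
proof (rule finite_subset)
  show "OS p w \<subseteq> Pow {0..<length w}" unfolding OS_def by blast
qed simp

lemma OS_nil: "OS [] w = {{}}"
proof (rule set_eqI)
  fix I
  have "I = {}" if "I \<subseteq> {0..<length w}" "card I = 0"
    using that finite_subset[OF that(1)] card_0_eq by blast
  then show "I \<in> OS [] w \<longleftrightarrow> I \<in> {{}}" unfolding OS_def by force
qed

lemma OS_Nil2: "OS (x#p) [] = {}"
  unfolding OS_def by auto

lemma sucset_decomp: "I = (if 0 \<in> I then insert 0 (Suc ` {j. Suc j \<in> I}) else Suc ` {j. Suc j \<in> I})"
  by (auto simp: image_iff) (metis not0_implies_Suc)+

lemma OS_Cons: "OS (x#p) (y#w) = (\<lambda>J. Suc ` J) ` OS (x#p) w \<union>
    (if x = y then (\<lambda>J. insert 0 (Suc ` J)) ` OS p w else {})" (is "?L = ?R")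
proof
  show "?L \<subseteq> ?R"
  proof
    fix I assume "I \<in> ?L"
    hence I: "I \<subseteq> {0..<Suc (length w)}" "card I = Suc (length p)" "nths (y#w) I = x#p"
      unfolding OS_def by auto
    define J where "J = {j. Suc j \<in> I}"
    have J: "J \<subseteq> {0..<length w}" using I(1) unfolding J_def by auto
    have fJ: "finite J" using J finite_subset by blast
    have ns: "nths (y#w) I = (if 0 \<in> I then [y] else []) @ nths w J"
      unfolding J_def by (rule nths_Cons)
    show "I \<in> ?R"
    proof (cases "0 \<in> I")
      case True
      have Ie: "I = insert 0 (Suc ` J)" using sucset_decomp[of I] True unfolding J_def by simp
      have "card I = Suc (card J)" unfolding Ie using fJ by (simp add: card_image)
      moreover have "x = y" "nths w J = p" using I(3) ns True by auto
      ultimately show ?thesis using I(2) J Ie unfolding OS_def by auto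
    next
      case False
      have Ie: "I = Suc ` J" using sucset_decomp[of I] False unfolding J_def by simp
      have "card I = card J" unfolding Ie using fJ by (simp add: card_image)
      moreover have "nths w J = x#p" using I(3) ns False by auto
      ultimately show ?thesis using I(2) J Ie unfolding OS_def by auto
    qed
  qed
next
  show "?R \<subseteq> ?L"
  proof
    fix I assume "I \<in> ?R"
    then consider J where "J \<in> OS (x#p) w" "I = Suc ` J"
      | J where "x = y" "J \<in> OS p w" "I = insert 0 (Suc ` J)"
      by (auto split: if_splits)
    then show "I \<in> ?L"
    proof cases
      case 1
      have fJ: "finite J" using 1(1) unfolding OS_def using finite_subset by blast
      have JJ: "{j. Suc j \<in> I} = J" using 1(2) by auto
      show ?thesis using 1 nths_Cons[of y w I] fJ unfolding OS_def JJ
        by (auto simp: card_image)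
    next
      case 2
      have fJ: "finite J" using 2(2) unfolding OS_def using finite_subset by blast
      have JJ: "{j. Suc j \<in> I} = J" using 2(3) by auto
      show ?thesis using 2 nths_Cons[of y w I] fJ unfolding OS_def JJ
        by (auto simp: card_image)
    qed
  qed
qed

lemma occ_sc: "occ p w = sc p w"
proof -
  have "card (OS p w) = sc p w"
  proof (induction p w rule: sc.induct)
    case (1 w) then show ?case by (simp add: OS_nil)
  next
    case (2 x p) then show ?case by (simp add: OS_Nil2)
  next
    case (3 x p y w)
    have inj1: "inj_on (\<lambda>J. Suc ` J) (OS (x#p) w)" by (simp add: inj_on_def inj_image_eq_iff)
    have inj2: "inj_on (\<lambda>J. insert 0 (Suc ` J)) (OS p w)"
      unfolding inj_on_def by (auto simp: inj_image_eq_iff)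
    have disj: "(\<lambda>J. Suc ` J) ` OS (x#p) w \<inter> (\<lambda>J. insert 0 (Suc ` J)) ` OS p w = {}" by auto
    show ?case
    proof (cases "x = y")
      case True
      have "card (OS (x#p) (y#w)) = card ((\<lambda>J. Suc ` J) ` OS (x#p) w) + card ((\<lambda>J. insert 0 (Suc ` J)) ` OS p w)"
        unfolding OS_Cons using True disj by (simp add: card_Un_disjoint OS_fin)
      then show ?thesis using 3 True card_image[OF inj1] card_image[OF inj2] by simp
    next
      case False
      have "card (OS (x#p) (y#w)) = card ((\<lambda>J. Suc ` J) ` OS (x#p) w)" using False by (simp add: OS_Cons)
      then show ?thesis using 3 False card_image[OF inj1] by simp
    qed
  qed
  then show ?thesis unfolding occ_def OS_def .
qed



lemma sc_repl: "sc (replicate k x) w = count_list w x choose k"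
proof (induction w arbitrary: k)
  case Nil then show ?case by (cases k) auto
next
  case (Cons y w)
  show ?case
  proof (cases k)
    case 0 then show ?thesis by simp
  next
    case (Suc k')
    have "sc (replicate k x) (y#w) = sc (replicate (Suc k') x) w + (if x=y then sc (replicate k' x) w else 0)"
      by (simp add: Suc)
    then show ?thesis using Cons.IH[of "Suc k'"] Cons.IH[of k'] Suc by auto
  qed
qed

lemma if_add0: "(if c then a + b else 0) = (if c then a else 0) + (if c then (b::nat) else 0)" by simp

lemma sc_split: "sc (u @ x # v) w = (\<Sum>s<length w. if w!s = x then sc u (take s w) * sc v (drop (Suc s) w) else 0)"
proof (induction w arbitrary: u)
  case Nil then show ?case by (cases u) auto
next
  case (Cons y w)
  show ?case
  proof (cases u)
    case Nil
    have "sc (x # v) (y # w) = sc (x#v) w + (if x = y then sc v w else 0)" by simp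
    also have "\<dots> = (\<Sum>s<length w. if w!s = x then sc [] (take s w) * sc v (drop (Suc s) w) else 0) + (if x = y then sc v w else 0)"
      using Cons.IH[of "[]"] by simp
    also have "\<dots> = (\<Sum>s<length (y#w). if (y#w)!s = x then sc [] (take s (y#w)) * sc v (drop (Suc s) (y#w)) else 0)"
      unfolding length_Cons sum.lessThan_Suc_shift by (simp del: sum.lessThan_Suc cong: if_cong)
    finally show ?thesis using Nil by (simp del: sum.lessThan_Suc cong: if_cong)
  next
    case (Cons z u')
    have "sc u (y#w) = sc (z#u') w + (if z = y then sc u' w else 0)" for w
      by (simp add: Cons)
    have "(\<Sum>s<length w. if w!s = x then sc (z#u') (y # take s w) * sc v (drop (Suc s) w) else 0)
      = (\<Sum>s<length w. if w!s = x then sc (z#u') (take s w) * sc v (drop (Suc s) w) else 0)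
       + (if z = y then (\<Sum>s<length w. if w!s = x then sc u' (take s w) * sc v (drop (Suc s) w) else 0) else 0)"
      by (auto simp: if_add0 sum.distrib algebra_simps cong: if_cong)
    note e2 = this
    have e1: "sc (u @ x # v) (y # w) = sc (z#u'@x#v) w + (if z = y then sc (u'@x#v) w else 0)"
      using Cons by simp
    have e3: "(\<Sum>s<length (y#w). if (y#w)!s = x then sc u (take s (y#w)) * sc v (drop (Suc s) (y#w)) else 0)
       = (\<Sum>s<length w. if w!s = x then sc (z#u') (y # take s w) * sc v (drop (Suc s) w) else 0)"
      unfolding length_Cons sum.lessThan_Suc_shift using Cons by (simp del: sum.lessThan_Suc cong: if_cong)
    show ?thesis unfolding e1 e3 e2 using Cons.IH[of "z#u'"] Cons.IH[of u'] by simp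
  qed
qed

lemma sc_mono: "sc q v \<le> sc q (u @ v)"
proof (induction u)
  case Nil then show ?case by simp
next
  case (Cons y u) then show ?case by (cases q) auto
qed

lemma sc_supermult: "sc p u * sc q v \<le> sc (p @ q) (u @ v)"
proof (induction u arbitrary: p)
  case Nil then show ?case by (cases p) (auto simp: sc_mono)
next
  case (Cons y u)
  show ?case
  proof (cases p)
    case Nil then show ?thesis using sc_mono[of q v "y#u"] by simp
  next
    case (Cons z p')
    then show ?thesis using Cons.IH[of p] Cons.IH[of p'] by (auto simp: algebra_simps)
  qed
qed

lemma sc_self: "sc p p \<ge> 1"
  by (induction p) auto



lemma runs_hd: "l \<noteq> [] \<Longrightarrow> runs l \<noteq> [] \<and> hd (hd (runs l)) = hd l"
  by (cases l) (auto split: list.splits)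

lemma runs_concat: "concat (runs l) = l"
  by (induction l) (auto split: list.splits)

lemma runs_const: "r \<in> set (runs l) \<Longrightarrow> r \<noteq> [] \<and> (\<forall>y\<in>set r. y = hd r)"
proof (induction l arbitrary: r)
  case Nil then show ?case by simp
next
  case (Cons x xs)
  show ?case
  proof (cases "runs xs")
    case Nil then show ?thesis using Cons.prems by simp
  next
    case (Cons r' rs)
    have "r' \<in> set (runs xs)" using Cons by simp
    then have h: "r' \<noteq> [] \<and> (\<forall>y\<in>set r'. y = hd r')" using Cons.IH by blast
    show ?thesis
    proof (cases "hd r' = x")
      case True
      then show ?thesis using Cons.prems Cons Cons.IH h by (auto split: if_splits)
    next
      case False
      then show ?thesis using Cons.prems Cons Cons.IH by (auto split: if_splits)
    qed
  qed
qed

lemma succ_hd: "successively (\<lambda>r s. hd r \<noteq> hd s) (r#rs) \<Longrightarrow> hd r' = hd r \<Longrightarrow>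
   successively (\<lambda>r s. hd r \<noteq> hd s) (r'#rs)"
  by (cases rs) auto

lemma runs_succ: "successively (\<lambda>r s. hd r \<noteq> hd s) (runs l)"
proof (induction l)
  case Nil then show ?case by simp
next
  case (Cons x xs)
  show ?case
  proof (cases "runs xs")
    case Nil then show ?thesis by simp
  next
    case (Cons r rs)
    show ?thesis
    proof (cases "hd r = x")
      case True
      then show ?thesis using Cons.IH Cons succ_hd[of r rs "x#r"] by simp
    next
      case False
      then show ?thesis using Cons.IH Cons by simp
    qed
  qed
qed

lemma runs_rep: "rest = [] \<or> hd rest \<noteq> c \<Longrightarrow> runs (replicate (Suc x) c @ rest) = replicate (Suc x) c # runs rest"
proof (induction x)
  case 0
  show ?case
  proof (cases rest)
    case Nil then show ?thesis by simp
  next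
    case (Cons y ys)
    then obtain r rs where "runs rest = r # rs" "hd r = y" using runs_hd[of rest]
      by (cases "runs rest") auto
    then show ?thesis using 0 Cons by simp
  qed
next
  case (Suc x)
  then show ?case by simp
qed



lemma count_rep: "count_list (replicate n x) y = (if x = y then n else 0)"
  by (induction n) auto

lemma count_bool: "count_list w a + count_list w (\<not> a) = length w"
  by (induction w) auto

lemma count_td: "count_list (take s w) x + count_list (drop s w) x = count_list w x"
  by (metis append_take_drop_id count_list_append)

lemma count_drop_Suc: "s < length w \<Longrightarrow> count_list (drop s w) x = (if w!s = x then 1 else 0) + count_list (drop (Suc s) w) x"
  by (simp add: Cons_nth_drop_Suc[symmetric])

lemma binom_strict: "1 \<le> k \<Longrightarrow> k \<le> x \<Longrightarrow> x < (y::nat) \<Longrightarrow> x choose k < y choose k"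
proof -
  assume h: "1 \<le> k" "k \<le> x" "x < y"
  then obtain k' where k': "k = Suc k'" by (cases k) auto
  have "x choose k < Suc x choose k" using h k' by simp
  also have "\<dots> \<le> y choose k" using h by (intro binomial_right_mono) simp
  finally show ?thesis .
qed

lemma all_rep: "(\<forall>y\<in>set xs. y = x) \<Longrightarrow> xs = replicate (length xs) x"
  using replicate_length_same by metis

lemma bool_notin: "(b::bool) \<notin> set xs \<Longrightarrow> xs = replicate (length xs) (\<not> b)"
proof (rule all_rep, intro ballI)
  fix y assume "b \<notin> set xs" "y \<in> set xs"
  then have "y \<noteq> b" by blast
  then show "y = (\<not> b)" by (cases y; cases b) auto
qed



lemma core:
  fixes w :: "bool list" and a :: bool
  assumes pdef: "p = replicate i a @ replicate (Suc (Suc j')) (\<not>a) @ replicate k a"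
    and ik: "1 \<le> i" "1 \<le> k"
    and opt: "\<And>w'. length w' = length w \<Longrightarrow> sc p w' \<le> sc p w"
    and pos: "0 < sc p w"
  shows "length (runs w) = 3"
proof -
  define b where "b = (\<not> a)"
  have ba: "b \<noteq> a" unfolding b_def by simp
  define j where "j = Suc (Suc j')"
  define n where "n = length w"
  define m where "m = count_list w a"
  define r where "r = count_list w b"
  have mr: "m + r = n" using count_bool[of w a] unfolding m_def r_def b_def n_def by simp
  define f where "f t = (t choose i) * ((m - t) choose k)" for t
  define F where "F = Max (f ` {0..m})"
  have Fge: "f t \<le> F" if "t \<le> m" for t unfolding F_def by (rule Max_ge) (use that in auto)
  obtain t0 where t0: "t0 \<le> m" "f t0 = F"
    using Max_in[of "f ` {0..m}"] unfolding F_def[symmetric] by auto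
  define W where "W = replicate t0 a @ replicate r b @ replicate (m - t0) a"
  have lW: "length W = length w" using t0 mr unfolding W_def n_def by simp
  have i1: "sc (replicate j b) (replicate r b) * sc (replicate k a) (replicate (m - t0) a)
     \<le> sc (replicate j b @ replicate k a) (replicate r b @ replicate (m - t0) a)" by (rule sc_supermult)
  have i2: "sc (replicate i a) (replicate t0 a) * sc (replicate j b @ replicate k a) (replicate r b @ replicate (m - t0) a) \<le> sc p W"
    unfolding pdef W_def b_def j_def by (rule sc_supermult)
  have "(t0 choose i) * ((r choose j) * ((m - t0) choose k)) \<le> sc p W"
    using order_trans[OF mult_le_mono2[OF i1] i2] by (simp add: sc_repl count_rep)
  then have lowM: "(r choose j) * F \<le> sc p w"
    using opt[OF lW] t0 unfolding f_def by (simp add: algebra_simps)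
  define v where "v s = drop (Suc s) w" for s
  have rep_j: "replicate j b = b # (replicate j' b @ [b])"
    unfolding j_def by (simp add: replicate_append_same)
  have p2: "p = replicate i a @ b # (replicate j' b @ b # replicate k a)"
    using pdef rep_j unfolding b_def j_def by simp
  define g1 where "g1 s s2 = (count_list (take s w) a choose i) *
      ((count_list (take s2 (v s)) b choose j') * (count_list (drop (Suc s2) (v s)) a choose k))" for s s2
  define g2 where "g2 s s2 = (count_list (take s2 (v s)) b choose j') * F" for s s2
  define G where "G g s = (if w!s = b then (\<Sum>s2<length (v s). if v s ! s2 = b then g s s2 else 0) else 0)"
    for g :: "nat \<Rightarrow> nat \<Rightarrow> nat" and s
  have E1: "sc p w = (\<Sum>s<n. G g1 s)"
  proof -
    have "sc p w = (\<Sum>s<n. if w!s = b then sc (replicate i a) (take s w) * sc (replicate j' b @ b # replicate k a) (v s) else 0)"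
      unfolding p2 sc_split n_def v_def ..
    also have "\<dots> = (\<Sum>s<n. G g1 s)"
      unfolding G_def g1_def sc_split sc_repl
      by (rule sum.cong) (auto simp: sum_distrib_left intro!: sum.cong)
    finally show ?thesis .
  qed
  have E2: "(r choose j) * F = (\<Sum>s<n. G g2 s)"
  proof -
    have "r choose j = sc ([] @ b # (replicate j' b @ b # [])) w"
      using rep_j unfolding r_def sc_repl[symmetric] by simp
    also have "\<dots> = (\<Sum>s<n. if w!s = b then sc (replicate j' b @ b # []) (v s) else 0)"
      unfolding sc_split n_def v_def by (simp cong: if_cong)
    finally have "(r choose j) * F = (\<Sum>s<n. if w!s = b then sc (replicate j' b @ b # []) (v s) else 0) * F" by simp
    also have "\<dots> = (\<Sum>s<n. G g2 s)"
      unfolding G_def g2_def sc_split sc_repl sum_distrib_right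
      by (rule sum.cong) (auto simp: sum_distrib_right intro!: sum.cong)
    finally show ?thesis .
  qed
  have AV: "count_list (take s w) a + count_list (v s) a = m" if "s < n" "w!s = b" for s
    using count_td[of s w a] count_drop_Suc[of s w a] that ba unfolding v_def m_def n_def by simp
  have P1: "g1 s s2 \<le> g2 s s2" if "s < n" "w!s = b" for s s2
  proof -
    define A where "A = count_list (take s w) a"
    have h1: "A + count_list (v s) a = m" using AV[OF that] unfolding A_def .
    have "count_list (drop (Suc s2) (v s)) a \<le> count_list (v s) a"
      using count_td[of "Suc s2" "v s" a] by simp
    then have "count_list (drop (Suc s2) (v s)) a choose k \<le> (m - A) choose k"
      using h1 by (intro binomial_right_mono) simp
    then have "(A choose i) * (count_list (drop (Suc s2) (v s)) a choose k) \<le> f A"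
      unfolding f_def by simp
    also have "\<dots> \<le> F" using h1 by (intro Fge) simp
    finally show ?thesis unfolding g1_def g2_def A_def[symmetric]
      by (metis (no_types, lifting) mult.left_commute mult_le_mono2)
  qed
  have Gmono: "G g1 s \<le> G g2 s" if "s < n" for s
    unfolding G_def using that P1 by (auto intro!: sum_mono)
  have upper: "sc p w \<le> (r choose j) * F"
    unfolding E1 E2 using Gmono by (intro sum_mono) auto
  have eqM: "sc p w = (r choose j) * F" using lowM upper by simp
  have strict: "\<not> (g1 s s2 < g2 s s2)" if "s < n" "w!s = b" "s2 < length (v s)" "v s ! s2 = b" for s s2
  proof
    assume lt: "g1 s s2 < g2 s s2"
    have "G g1 s < G g2 s" unfolding G_def using that lt P1
      by (auto intro!: sum_strict_mono_ex1)
    then have "(\<Sum>s<n. G g1 s) < (\<Sum>s<n. G g2 s)" using Gmono that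
      by (intro sum_strict_mono_ex1) auto
    then show False using E1 E2 eqM by simp
  qed
  have rj: "j \<le> r" and Fpos: "0 < F" using eqM pos by (auto simp: zero_less_binomial_iff)
  have "b \<in> set w" using rj unfolding r_def j_def by (metis count_notin not_less_eq_eq zero_le Suc_le_eq) 
  then have ex: "\<exists>s. s < n \<and> w!s = b" by (auto simp: in_set_conv_nth n_def)
  define s0 where "s0 = (LEAST s. s < n \<and> w!s = b)"
  have s0: "s0 < n" "w!s0 = b" using LeastI_ex[OF ex] unfolding s0_def by auto
  have before: "b \<notin> set (take s0 w)"
  proof
    assume "b \<in> set (take s0 w)"
    then obtain q where "q < length (take s0 w)" "take s0 w ! q = b" by (auto simp: in_set_conv_nth)
    then have "q < s0" "q < n" "w!q = b" using s0 by (auto simp: n_def)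
    then show False using not_less_Least[of q "\<lambda>s. s < n \<and> w!s = b"] unfolding s0_def[symmetric] by auto
  qed
  define V where "V = v s0"
  have cbV: "count_list V b + 1 = r"
    using count_td[of s0 w b] count_drop_Suc[of s0 w b] s0 before unfolding V_def v_def r_def n_def by simp
  have "b \<in> set V" using cbV rj unfolding j_def by (metis count_notin add_le_cancel_right le_zero_eq numeral_2_eq_2 one_add_one Suc_le_mono nat.distinct(1) plus_1_eq_Suc le_SucE le_add1)
  then have ex2: "\<exists>s2. s2 < length V \<and> V!s2 = b" by (auto simp: in_set_conv_nth)
  define L where "L = (GREATEST s2. s2 < length V \<and> V!s2 = b)"
  have L: "L < length V" "V!L = b"
    using GreatestI_ex_nat[OF ex2, of "length V"] unfolding L_def by auto
  have after: "b \<notin> set (drop (Suc L) V)"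
  proof
    assume "b \<in> set (drop (Suc L) V)"
    then obtain q where "q < length (drop (Suc L) V)" "drop (Suc L) V ! q = b" by (auto simp: in_set_conv_nth)
    then have "Suc L + q < length V" "V ! (Suc L + q) = b" by auto
    then have "Suc L + q \<le> L"
      using Greatest_le_nat[of "\<lambda>s2. s2 < length V \<and> V!s2 = b" "Suc L + q" "length V"] unfolding L_def by auto
    then show False by simp
  qed
  have cbL: "count_list (take L V) b + 2 = r"
    using count_td[of L V b] count_drop_Suc[of L V b] L after cbV by simp
  have Cb: "0 < count_list (take L V) b choose j'" using cbL rj unfolding j_def by simp
  have ns: "\<not> g1 s0 L < g2 s0 L" using strict[OF s0] L unfolding V_def by auto
  define A where "A = count_list (take s0 w) a"
  define e where "e = count_list (drop (Suc L) V) a"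
  have g1e: "g1 s0 L = (count_list (take L V) b choose j') * ((A choose i) * (e choose k))"
    unfolding g1_def A_def e_def V_def by (simp add: algebra_simps)
  have g2e: "g2 s0 L = (count_list (take L V) b choose j') * F"
    unfolding g2_def V_def by simp
  have T: "F \<le> (A choose i) * (e choose k)"
  proof (rule ccontr)
    assume "\<not> F \<le> (A choose i) * (e choose k)"
    then have "(A choose i) * (e choose k) < F" by simp
    then have "g1 s0 L < g2 s0 L" unfolding g1e g2e using Cb by simp
    then show False using ns by simp
  qed
  have "0 < (A choose i) * (e choose k)" using less_le_trans[OF Fpos T] by simp
  then have Ai: "i \<le> A" "k \<le> e" by (simp_all add: nat_0_less_mult_iff)
  have AV0: "A + count_list V a = m" using AV[OF s0] unfolding A_def V_def .
  have eV: "e = count_list V a"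
  proof (rule ccontr)
    assume "e \<noteq> count_list V a"
    moreover have "e \<le> count_list V a" using count_td[of "Suc L" V a] unfolding e_def by simp
    ultimately have "e < count_list V a" by simp
    then have "e choose k < (m - A) choose k" using binom_strict[of k e "m - A"] ik Ai AV0 by simp
    moreover have "0 < A choose i" using Ai by simp
    ultimately have "(A choose i) * (e choose k) < (A choose i) * ((m-A) choose k)" by simp
    also have "\<dots> = f A" unfolding f_def ..
    also have "\<dots> \<le> F" using AV0 by (intro Fge) simp
    finally show False using T by simp
  qed
  have noa: "a \<notin> set (take (Suc L) V)"
    using count_td[of "Suc L" V a] eV unfolding e_def by (simp add: count_list_0_iff[symmetric])
  have w_dec0: "w = take s0 w @ b # V"
    using id_take_nth_drop[of s0 w] s0 unfolding V_def v_def n_def by simp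
  have w_dec: "w = take s0 w @ b # take (Suc L) V @ drop (Suc L) V"
    unfolding append_take_drop_id by (rule w_dec0)
  have t1: "take s0 w = replicate s0 a"
    using bool_notin[OF before] s0 unfolding n_def b_def by simp
  have t2: "take (Suc L) V = replicate (Suc L) b"
    using bool_notin[OF noa] L unfolding b_def by simp
  have t3: "drop (Suc L) V = replicate (length (drop (Suc L) V)) a"
    using bool_notin[OF after] unfolding b_def by simp
  have "s0 \<noteq> 0" using Ai ik unfolding A_def by (cases "s0 = 0") auto
  then obtain s' where s': "s0 = Suc s'" by (cases s0) auto
  have "drop (Suc L) V \<noteq> []" using Ai ik unfolding e_def by auto
  then obtain e' where e': "length (drop (Suc L) V) = Suc e'" by (cases "length (drop (Suc L) V)") auto
  have wf: "w = replicate (Suc s') a @ (replicate (Suc (Suc L)) b @ (replicate (Suc e') a @ []))"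
    using w_dec t1 t2 t3 s' e' by simp
  have "runs w = [replicate (Suc s') a, replicate (Suc (Suc L)) b, replicate (Suc e') a]"
    unfolding wf using ba by (simp add: runs_rep del: replicate_Suc append_Nil2)
  then show ?thesis by simp
qed



lemma p_shape:
  fixes p :: "bool list"
  assumes "length (runs p) = 3" "length (runs p ! 1) \<ge> 2"
  shows "\<exists>a i j' k. p = replicate i a @ replicate (Suc (Suc j')) (\<not>a) @ replicate k a \<and> 1 \<le> i \<and> 1 \<le> k"
proof -
  obtain r0 r1 r2 where R: "runs p = [r0, r1, r2]"
  proof -
    obtain r0 rs where "runs p = r0 # rs" using assms(1) by (cases "runs p") auto
    moreover obtain r1 rs' where "rs = r1 # rs'" using assms(1) calculation by (cases rs) auto
    moreover obtain r2 rs'' where "rs' = r2 # rs''" using assms(1) calculation by (cases rs') auto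
    ultimately show ?thesis using assms(1) that by auto
  qed
  have pc: "p = r0 @ r1 @ r2" using runs_concat[of p] R by simp
  have c0: "r0 \<noteq> [] \<and> (\<forall>y\<in>set r0. y = hd r0)" using runs_const[of r0 p] R by simp
  have c1: "r1 \<noteq> [] \<and> (\<forall>y\<in>set r1. y = hd r1)" using runs_const[of r1 p] R by simp
  have c2: "r2 \<noteq> [] \<and> (\<forall>y\<in>set r2. y = hd r2)" using runs_const[of r2 p] R by simp
  have sc: "hd r0 \<noteq> hd r1" "hd r1 \<noteq> hd r2" using runs_succ[of p] R by auto
  define a where "a = hd r0"
  have h1: "hd r1 = (\<not> a)" using sc unfolding a_def by (cases "hd r0"; cases "hd r1") auto
  have h2: "hd r2 = a" using sc h1 by (cases "hd r2"; cases a) auto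
  define l0 where "l0 = length r0"
  define l1 where "l1 = length r1"
  define l2 where "l2 = length r2"
  have e0: "r0 = replicate l0 a" using all_rep[of r0 a] c0 unfolding a_def l0_def by blast
  have e1: "r1 = replicate l1 (\<not> a)" using all_rep[of r1 "\<not> a"] c1 h1 unfolding l1_def by simp
  have e2: "r2 = replicate l2 a" using all_rep[of r2 a] c2 h2 unfolding l2_def by simp
  have l1: "l1 \<ge> 2" using assms(2) R unfolding l1_def by simp
  then obtain j' where j': "l1 = Suc (Suc j')" by (metis add_2_eq_Suc le_Suc_ex)
  have "p = replicate l0 a @ replicate (Suc (Suc j')) (\<not>a) @ replicate l2 a"
    using pc e0 e1 e2 j' by simp
  moreover have "1 \<le> l0" "1 \<le> l2" using c0 c2 unfolding l0_def l2_def by (auto simp: Suc_le_eq)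
  ultimately show ?thesis by blast
qed

theorem mainTheorem10:
  fixes p :: "bool list" and n :: nat and w :: "bool list"
  assumes "length (runs p) = 3"
    and "length (runs p ! 1) \<ge> 2"
    and "n \<ge> length p"
    and "length w = n"
    and "optimal p w"
  shows "length (runs w) = 3"
proof -
  obtain a i j' k where P: "p = replicate i a @ replicate (Suc (Suc j')) (\<not>a) @ replicate k a" "1 \<le> i" "1 \<le> k"
    using p_shape[OF assms(1,2)] by blast
  have fin: "finite {w :: bool list. length w = n}"
    using finite_lists_length_eq[of "UNIV :: bool set" n] by simp
  have le: "occ p w' \<le> maxocc n p" if "length w' = n" for w'
    unfolding maxocc_def using fin that by (intro Max_ge) auto
  have wopt: "occ p w = maxocc n p" using assms(4,5) unfolding optimal_def by simp
  have opt: "sc p w' \<le> sc p w" if "length w' = length w" for w'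
    using le[of w'] that assms(4) wopt by (simp add: occ_sc)
  have "sc p p * sc [] (replicate (n - length p) a) \<le> sc (p @ []) (p @ replicate (n - length p) a)"
    by (rule sc_supermult)
  then have "1 \<le> sc p (p @ replicate (n - length p) a)" using sc_self[of p] by simp
  also have "\<dots> \<le> sc p w" using opt[of "p @ replicate (n - length p) a"] assms(3,4) by simp
  finally have pos: "0 < sc p w" by simp
  show ?thesis using core[OF P opt pos] by blast
qed

end
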